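(* Fix $t\in\{1,\dots,M\}$ and let $z^*\in F(\mathcal{T}_t)$ with $|K_t(z^* )|=1$. Set $$r_t=\min\Big\{d_{sep}(z^*,C_t),\ \frac{d_{sep}(z^*,C_t)+d_{esc}(z^*,C_t)}{2}\Big\}.$$ Then every $z\in B(z^*,r_t)$ satisfies $K_t(z)=K_t(z^* )$.
   Context: Fix reals $W,H>0$, integers $N\ge N_m\ge 2$, and widths $w_i>0$, heights $h_i>0$ for $1\le i\le N_m$. Points of $\mathbb{R}^{2N}$ are written $z=(x,y)$ with $x=(x_1,\dots,x_N)$, $y=(y_1,\dots,y_N)$. For $1\le i\le N_m$ let $B_i^x=\{z: 0\le x_i\le W-w_i\}$, $B_i^y=\{z: 0\le y_i\le H-h_i\}$; for $i\neq j$ let $B_{i,j}=B_i^x\cap B_i^y\cap B_j^x\cap B_j^y$, $O^x_{i,j}=\{z: x_i+w_i\le x_j\}$, $O^y_{i,j}=\{z: y_i+h_i\le y_j\}$. Define the closed convex sets $C_{i,j,\mathsf{L}}=O^x_{i,j}\cap B_{i,j}$, $C_{i,j,\mathsf{R}}=O^x_{j,i}\cap B_{i,j}$, $C_{i,j,\mathsf{B}}=O^y_{i,j}\cap B_{i,j}$, $C_{i,j,\mathsf{A}}=O^y_{j,i}\cap B_{i,j}$ (assumed nonempty) and $C_{i,j}=C_{i,j,\mathsf{L}}\cup C_{i,j,\mathsf{R}}\cup C_{i,j,\mathsf{B}}\cup C_{i,j,\mathsf{A}}$. Enumerate the pairs $1\le i<j\le N_m$ by $t=1,\dots,M$ and write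 $C_t=C_{i,j}$, $C_{t,k}=C_{i,j,k}$. With the Euclidean norm and $\mathrm{d}(z,C)=\inf_{c\in C}\|z-c\|$: $\mathcal{P}_t(z)=\{c\in C_t:\|z-c\|=\mathrm{d}(z,C_t)\}$, $P_{t,k}(z)$ is the unique nearest point of $C_{t,k}$ to $z$; for a fixed $\lambda\in(0,2)$, $\mathcal{T}_t(z)=\{z+\lambda(p-z):p\in\mathcal{P}_t(z)\}$, $F(\mathcal{T}_t)=\{z: z\in\mathcal{T}_t(z)\}$. Active indices: $K_t(z)=\{k\in\{\mathsf{L},\mathsf{R},\mathsf{B},\mathsf{A}\}: P_{t,k}(z)\in\mathcal{P}_t(z)\}$. $d_{esc}(z^*,C_t)=\inf\{\|z-z^*\| : z\notin C_{t,k}\text{ for some }k\in K_t(z^* )\}$; $d_{sep}(z^*,C_t)=\min\{\mathrm{d}(z^*,C_{t,k}) : k\notin K_t(z^* )\}$. $B(z,r)$ is the open Euclidean ball (empty if $r=0$). *)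

theory Defs
  imports "HOL-Analysis.Analysis"
begin

text \<open>Points of R^(2N) are pairs (x,y) with x y :: real^'n, CARD('n) = N.
 The product norm is the Euclidean norm of R^(2N).\<close>

type_synonym ('n) pt = "(real^'n) \<times> (real^'n)"

datatype side = SL | SR | SB | SA

definition Bx :: "real \<Rightarrow> ('n::finite \<Rightarrow> real) \<Rightarrow> 'n \<Rightarrow> 'n pt set" where
  "Bx W w i = {z. 0 \<le> fst z $ i \<and> fst z $ i \<le> W - w i}"

definition By :: "real \<Rightarrow> ('n::finite \<Rightarrow> real) \<Rightarrow> 'n \<Rightarrow> 'n pt set" where
  "By H h i = {z. 0 \<le> snd z $ i \<and> snd z $ i \<le> H - h i}"

definition Bij :: "real \<Rightarrow> real \<Rightarrow> ('n::finite \<Rightarrow> real) \<Rightarrow> ('n::finite \<Rightarrow> real) \<Rightarrow> 'n \<Rightarrow> 'n \<Rightarrow> 'n pt set" where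
  "Bij W H w h i j = Bx W w i \<inter> By H h i \<inter> Bx W w j \<inter> By H h j"

definition Ox :: "('n::finite \<Rightarrow> real) \<Rightarrow> 'n \<Rightarrow> 'n \<Rightarrow> 'n pt set" where
  "Ox w i j = {z. fst z $ i + w i \<le> fst z $ j}"

definition Oy :: "('n::finite \<Rightarrow> real) \<Rightarrow> 'n \<Rightarrow> 'n \<Rightarrow> 'n pt set" where
  "Oy h i j = {z. snd z $ i + h i \<le> snd z $ j}"

definition Cset :: "real \<Rightarrow> real \<Rightarrow> ('n::finite \<Rightarrow> real) \<Rightarrow> ('n::finite \<Rightarrow> real) \<Rightarrow> 'n \<Rightarrow> 'n \<Rightarrow> side \<Rightarrow> 'n pt set" where
  "Cset W H w h i j k = (case k of
      SL \<Rightarrow> Ox w i j \<inter> Bij W H w h i j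
    | SR \<Rightarrow> Ox w j i \<inter> Bij W H w h i j
    | SB \<Rightarrow> Oy h i j \<inter> Bij W H w h i j
    | SA \<Rightarrow> Oy h j i \<inter> Bij W H w h i j)"

definition Cunion :: "real \<Rightarrow> real \<Rightarrow> ('n::finite \<Rightarrow> real) \<Rightarrow> ('n::finite \<Rightarrow> real) \<Rightarrow> 'n \<Rightarrow> 'n \<Rightarrow> 'n pt set" where
  "Cunion W H w h i j = Cset W H w h i j SL \<union> Cset W H w h i j SR \<union> Cset W H w h i j SB \<union> Cset W H w h i j SA"

definition Pset :: "'a::metric_space set \<Rightarrow> 'a \<Rightarrow> 'a set" where
  "Pset C z = {c \<in> C. dist z c = infdist z C}"

definition Tmap :: "real \<Rightarrow> 'a::real_normed_vector set \<Rightarrow> 'a \<Rightarrow> 'a set" where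
  "Tmap lam C z = {z + lam *\<^sub>R (p - z) | p. p \<in> Pset C z}"

definition Fix :: "real \<Rightarrow> 'a::real_normed_vector set \<Rightarrow> 'a set" where
  "Fix lam C = {z. z \<in> Tmap lam C z}"

text \<open>Active indices; P_{t,k}(z) is the unique nearest point closest_point.\<close>
definition Kact :: "real \<Rightarrow> real \<Rightarrow> ('n::finite \<Rightarrow> real) \<Rightarrow> ('n::finite \<Rightarrow> real) \<Rightarrow> 'n \<Rightarrow> 'n \<Rightarrow> 'n pt \<Rightarrow> side set" where
  "Kact W H w h i j z = {k. closest_point (Cset W H w h i j k) z \<in> Pset (Cunion W H w h i j) z}"

definition desc :: "real \<Rightarrow> real \<Rightarrow> ('n::finite \<Rightarrow> real) \<Rightarrow> ('n::finite \<Rightarrow> real) \<Rightarrow> 'n \<Rightarrow> 'n \<Rightarrow> 'n pt \<Rightarrow> real" where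
  "desc W H w h i j zs = Inf {norm (z - zs) | z. \<exists>k \<in> Kact W H w h i j zs. z \<notin> Cset W H w h i j k}"

definition dsep :: "real \<Rightarrow> real \<Rightarrow> ('n::finite \<Rightarrow> real) \<Rightarrow> ('n::finite \<Rightarrow> real) \<Rightarrow> 'n \<Rightarrow> 'n \<Rightarrow> 'n pt \<Rightarrow> real" where
  "dsep W H w h i j zs = Min ((\<lambda>k. infdist zs (Cset W H w h i j k)) ` ({SL, SR, SB, SA} - Kact W H w h i j zs))"

end

theory Submission
  imports Defs
begin

lemma dist_cp:
  fixes S :: "'a::{real_inner,heine_borel} set"
  assumes "closed S" "S \<noteq> {}"
  shows "dist x (closest_point S x) = infdist x S"
proof (rule antisym)
  show "dist x (closest_point S x) \<le> infdist x S"
    unfolding infdist_def using assms closest_point_le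
    by (auto intro!: cINF_greatest)
  show "infdist x S \<le> dist x (closest_point S x)"
    by (rule infdist_le[OF closest_point_in_set[OF assms]])
qed

lemma closed_Cset: "closed (Cset W H w h i j k)"
proof -
  have b: "closed (Bij W H w h i j)"
    unfolding Bij_def Bx_def By_def
    by (intro closed_Int closed_Collect_conj closed_Collect_le continuous_intros)
  have ox: "closed (Ox w a b)" for a b
    unfolding Ox_def by (intro closed_Collect_le continuous_intros)
  have oy: "closed (Oy h a b)" for a b
    unfolding Oy_def by (intro closed_Collect_le continuous_intros)
  show ?thesis unfolding Cset_def
    by (cases k) (simp_all add: closed_Int b ox oy)
qed

lemma Cunion_eq: "Cunion W H w h i j = (\<Union>k\<in>{SL,SR,SB,SA}. Cset W H w h i j k)"
  unfolding Cunion_def by auto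

lemma side_univ: "(UNIV :: side set) = {SL,SR,SB,SA}"
  using side.exhaust by auto

lemma Kact_char:
  assumes ne: "\<And>k. Cset W H w h i j k \<noteq> {}"
  shows "Kact W H w h i j x = {k. \<forall>k'. infdist x (Cset W H w h i j k) \<le> infdist x (Cset W H w h i j k')}"
proof -
  define g where "g k = infdist x (Cset W H w h i j k)" for k
  have U: "infdist x (Cunion W H w h i j) = min (min (min (g SL) (g SR)) (g SB)) (g SA)"
    unfolding Cunion_def g_def using ne
    by (simp add: infdist_Un_min)
  have "closest_point (Cset W H w h i j k) x \<in> Pset (Cunion W H w h i j) x
        \<longleftrightarrow> (\<forall>k'. g k \<le> g k')" for k
  proof -
    have mem: "closest_point (Cset W H w h i j k) x \<in> Cunion W H w h i j"
      using closest_point_in_set[OF closed_Cset ne, of k x] unfolding Cunion_def by (cases k) auto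
    have "closest_point (Cset W H w h i j k) x \<in> Pset (Cunion W H w h i j) x
       \<longleftrightarrow> g k = min (min (min (g SL) (g SR)) (g SB)) (g SA)"
      unfolding Pset_def using mem dist_cp[OF closed_Cset ne] U g_def by auto
    also have "\<dots> \<longleftrightarrow> (\<forall>k'. g k \<le> g k')"
    proof -
      have all: "(\<forall>k'. g k \<le> g k') \<longleftrightarrow> (g k \<le> g SL \<and> g k \<le> g SR \<and> g k \<le> g SB \<and> g k \<le> g SA)"
        by (metis side.exhaust)
      show ?thesis unfolding all by (cases k) (auto simp add: min_def)
    qed

    finally show ?thesis .
  qed
  then show ?thesis unfolding Kact_def g_def by auto
qed

theorem mainTheorem5:
  fixes W H lam :: real and w h :: "'n::{finite,linorder} \<Rightarrow> real"
    and I :: "'n set" and i j :: 'n and zs :: "'n pt"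
  assumes "W > 0" and "H > 0"
    and "card I \<ge> 2"
    and "\<forall>a\<in>I. w a > 0 \<and> h a > 0"
    and "\<forall>a\<in>I. \<forall>b\<in>I. a \<noteq> b \<longrightarrow> (\<forall>k. Cset W H w h a b k \<noteq> {})"
    and "0 < lam" and "lam < 2"
    and "i \<in> I" and "j \<in> I" and "i < j"
    and "zs \<in> Fix lam (Cunion W H w h i j)"
    and "card (Kact W H w h i j zs) = 1"
  shows "\<forall>z \<in> ball zs (min (dsep W H w h i j zs)
                       ((dsep W H w h i j zs + desc W H w h i j zs) / 2)).
           Kact W H w h i j z = Kact W H w h i j zs"
proof -
  note A = assms
  define C where "C k = Cset W H w h i j k" for k
  define g where "g k x = infdist x (C k)" for k x
  have ij: "i \<noteq> j" using A(10) by auto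
  have ne: "\<And>k. Cset W H w h i j k \<noteq> {}" using A(5) A(8) A(9) ij by blast
  have cl: "\<And>k. closed (C k)" unfolding C_def by (rule closed_Cset)
  have neC: "\<And>k. C k \<noteq> {}" unfolding C_def by (rule ne)
  have KC: "\<And>x. Kact W H w h i j x = {k. \<forall>k'. g k x \<le> g k' x}"
    unfolding g_def C_def by (rule Kact_char[OF ne])
  obtain p where p: "zs = zs + lam *\<^sub>R (p - zs)" "p \<in> Pset (Cunion W H w h i j) zs"
    using A(11) unfolding Fix_def Tmap_def by auto
  have "lam *\<^sub>R (p - zs) = 0" using p(1) by (metis add_cancel_left_right)
  hence "p = zs" using A(6) by simp
  hence "zs \<in> Cunion W H w h i j" using p(2) unfolding Pset_def by auto
  then obtain k1 where k1: "zs \<in> C k1" unfolding Cunion_def C_def by blast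
  have g0: "g k x = 0 \<longleftrightarrow> x \<in> C k" for k x
    unfolding g_def using in_closed_iff_infdist_zero[OF cl neC] by simp
  have gnn: "\<And>k x. 0 \<le> g k x" unfolding g_def by (rule infdist_nonneg)
  have Kzs: "Kact W H w h i j zs = {k. zs \<in> C k}"
  proof -
    have "g k1 zs = 0" using g0 k1 by simp
    hence "(\<forall>k'. g k zs \<le> g k' zs) \<longleftrightarrow> g k zs = 0" for k
      using gnn by (metis order.antisym)
    thus ?thesis unfolding KC using g0 by auto
  qed
  obtain k0 where K0: "Kact W H w h i j zs = {k0}" using A(12) card_1_singletonE by blast
  have zk0: "zs \<in> C k0" using K0 Kzs by auto
  define ds where "ds = dsep W H w h i j zs"
  define de where "de = desc W H w h i j zs"
  have dsle: "ds \<le> g k zs" if "k \<noteq> k0" for k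
  proof -
    have "k \<in> {SL, SR, SB, SA} - Kact W H w h i j zs" using that K0 by (cases k) auto
    thus ?thesis unfolding ds_def dsep_def g_def C_def K0[symmetric]
      by (intro Min_le) auto
  qed
  have dele: "de \<le> dist z zs" if "z \<notin> C k0" for z
  proof -
    have "de = Inf {norm (z - zs) | z. z \<notin> C k0}"
      unfolding de_def desc_def K0 C_def by simp
    also have "\<dots> \<le> norm (z - zs)"
    proof (rule cInf_lower)
      show "norm (z - zs) \<in> {norm (z - zs) | z. z \<notin> C k0}" using that by blast
    qed (auto intro!: bdd_belowI[where m=0])
    finally show ?thesis by (simp add: dist_norm)
  qed
  have gk0: "g k0 z \<le> max 0 (dist z zs - de)" for z
  proof (cases "z \<in> C k0")
    case True hence "g k0 z = 0" using g0 by simp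
    thus ?thesis by simp
  next
    case False
    note dz = dele[OF False]
    show ?thesis
    proof (cases "de > 0")
      case False
      have "g k0 z \<le> dist z zs" unfolding g_def by (rule infdist_le[OF zk0])
      thus ?thesis using False by simp
    next
      case True
      define d where "d = dist z zs"
      have dpos: "d > 0" using True dz d_def by linarith
      have "ball zs de \<subseteq> C k0"
      proof
        fix y assume y: "y \<in> ball zs de"
        show "y \<in> C k0"
        proof (rule ccontr)
          assume "y \<notin> C k0"
          hence "de \<le> dist y zs" by (rule dele)
          thus False using y by (simp add: dist_commute)
        qed
      qed
      hence "closure (ball zs de) \<subseteq> C k0" by (rule closure_minimal[OF _ cl])
      hence cb: "cball zs de \<subseteq> C k0" using closure_ball[OF True, of zs] by simp
      define y where "y = zs + (de / d) *\<^sub>R (z - zs)"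
      have nz: "norm (z - zs) = d" unfolding d_def by (simp add: dist_norm)
      have "dist zs y = norm ((de / d) *\<^sub>R (z - zs))" by (simp add: y_def dist_norm)
      also have "\<dots> = de / d * d" using nz dpos True by simp
      also have "\<dots> = de" using dpos by simp
      finally have "dist zs y = de" .
      hence yin: "y \<in> C k0" using cb by auto
      have q: "de / d \<le> 1" using dz d_def dpos by simp
      have "z - y = (1 - de / d) *\<^sub>R (z - zs)" unfolding y_def by (simp add: algebra_simps)
      hence "dist z y = \<bar>1 - de / d\<bar> * d" unfolding dist_norm using nz by simp
      also have "\<dots> = (1 - de / d) * d" using q by simp
      also have "\<dots> = d - de" using dpos by (simp add: algebra_simps)
      finally have "g k0 z \<le> d - de" unfolding g_def using infdist_le[OF yin, of z] by simp
      thus ?thesis unfolding d_def by simp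
    qed
  qed
  show ?thesis
  proof
    fix z assume z: "z \<in> ball zs (min (dsep W H w h i j zs) ((dsep W H w h i j zs + desc W H w h i j zs) / 2))"
    hence "dist zs z < min ds ((ds + de) / 2)"
      unfolding ds_def de_def by (simp only: mem_ball)
    hence "dist zs z < ds \<and> dist zs z < (ds + de) / 2" by (simp only: min_less_iff_conj)
    moreover have "dist z zs = dist zs z" by (rule dist_commute)
    ultimately have zd0: "dist z zs < ds \<and> 2 * dist z zs < ds + de" by (simp add: field_simps)
    have zd1: "dist z zs < ds" using zd0 by simp
    have zd2: "2 * dist z zs < ds + de" using zd0 by simp
    note zd = zd1 zd2
    have lt: "g k0 z < g k z" if "k \<noteq> k0" for k
    proof -
      have "g k zs \<le> g k z + dist zs z" unfolding g_def by (rule infdist_triangle)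
      moreover have "dist zs z = dist z zs" by (rule dist_commute)
      moreover have "ds \<le> g k zs" by (rule dsle[OF that])
      ultimately have t1: "ds - dist z zs \<le> g k z" by linarith
      have "max 0 (dist z zs - de) < ds - dist z zs"
        unfolding max_less_iff_conj using zd1 zd2 by linarith
      moreover have "g k0 z \<le> max 0 (dist z zs - de)" by (rule gk0)
      ultimately show ?thesis using t1 by linarith
    qed
    have "{k. \<forall>k'. g k z \<le> g k' z} = {k0}"
    proof (intro set_eqI iffI)
      fix k assume "k \<in> {k. \<forall>k'. g k z \<le> g k' z}"
      hence le: "g k z \<le> g k0 z" by simp
      show "k \<in> {k0}"
      proof (rule ccontr)
        assume "k \<notin> {k0}"
        hence "g k0 z < g k z" using lt by simp
        thus False using le by simp
      qed
    next
      fix k assume "k \<in> {k0}"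
      hence kk: "k = k0" by simp
      have "g k0 z \<le> g k' z" for k'
      proof (cases "k' = k0")
        case True thus ?thesis by simp
      next
        case False thus ?thesis using lt[OF False] by simp
      qed
      thus "k \<in> {k. \<forall>k'. g k z \<le> g k' z}" using kk by simp
    qed
    thus "Kact W H w h i j z = Kact W H w h i j zs" unfolding KC[of z] K0 .
  qed
qed

end
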